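(* Let $\mathbb{F}$ be a field, $\sigma$ a field automorphism of $\mathbb{F}$ of finite order $m$, $\delta=0$, and $K=\{\beta\in\mathbb{F}:\sigma(\beta)=\beta\}$. A vector $(a_1,\dots,a_r)\in\mathbb{F}^r$ is a $(\sigma,\delta)$-multiplicity sequence if and only if either $a_1=\dots=a_r=0$, or $a_1\ne0$ and for each $i=1,\dots,r-1$ there is $\beta_i\in\mathbb{F}^*$ with $$a_{i+1}=\sigma(\beta_i)\beta_i^{-1}a_i\quad\text{and}\quad \mathrm{T}_{\mathbb{F}/K}(\beta_ia_i^{-1})\ne0.$$ In particular, for $a\ne0$, $(a,\dots,a)\in\mathbb{F}^r$ ($r\ge2$) is a $(\sigma,\delta)$-multiplicity sequence if and only if $\mathrm{T}_{\mathbb{F}/K}(a^{-1})\ne0$.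
   Context: $\mathbb{F}[x;\sigma,0]$ is the skew polynomial ring with $xa=\sigma(a)x$. $\mathrm{T}_{\mathbb{F}/K}(a)=\sum_{i=0}^{m-1}\sigma^i(a)$. For $\mathbf a=(a_1,\dots,a_r)$, $P_{\mathbf a}=(x-a_r)\cdots(x-a_1)$; $\mathbf a$ is a $(\sigma,\delta)$-multiplicity sequence if $a_1$ is the only $b\in\mathbb{F}$ such that $x-b$ divides $P_{\mathbf a}$ on the right. *)

theory Defs
  imports "HOL-Computational_Algebra.Polynomial"
begin

definition field_aut :: "('a::field \<Rightarrow> 'a) \<Rightarrow> bool" where
  "field_aut \<sigma> \<longleftrightarrow> bij \<sigma> \<and> (\<forall>x y. \<sigma> (x + y) = \<sigma> x + \<sigma> y) \<and> (\<forall>x y. \<sigma> (x * y) = \<sigma> x * \<sigma> y)"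

definition aut_order :: "('a \<Rightarrow> 'a) \<Rightarrow> nat \<Rightarrow> bool" where
  "aut_order \<sigma> m \<longleftrightarrow> 0 < m \<and> (\<sigma> ^^ m) = id \<and> (\<forall>k. 0 < k \<and> k < m \<longrightarrow> (\<sigma> ^^ k) \<noteq> id)"

definition trace_aut :: "('a::field \<Rightarrow> 'a) \<Rightarrow> nat \<Rightarrow> 'a \<Rightarrow> 'a" where
  "trace_aut \<sigma> m a = (\<Sum>i<m. (\<sigma> ^^ i) a)"

text \<open>Multiplication in the skew polynomial ring F[x;sigma,0], with x a = sigma(a) x.\<close>
definition skew_mult :: "('a::field \<Rightarrow> 'a) \<Rightarrow> 'a poly \<Rightarrow> 'a poly \<Rightarrow> 'a poly" where
  "skew_mult \<sigma> p q = (\<Sum>i\<le>degree p. monom (coeff p i) i * map_poly (\<sigma> ^^ i) q)"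

text \<open>P_a = (x - a_r) ... (x - a_1) for the list a = [a_1, ..., a_r].\<close>
definition P_seq :: "('a::field \<Rightarrow> 'a) \<Rightarrow> 'a list \<Rightarrow> 'a poly" where
  "P_seq \<sigma> as = foldl (\<lambda>P a. skew_mult \<sigma> [:-a, 1:] P) 1 as"

definition right_lin_dvd :: "('a::field \<Rightarrow> 'a) \<Rightarrow> 'a \<Rightarrow> 'a poly \<Rightarrow> bool" where
  "right_lin_dvd \<sigma> b P \<longleftrightarrow> (\<exists>Q. P = skew_mult \<sigma> Q [:-b, 1:])"

definition mult_seq :: "('a::field \<Rightarrow> 'a) \<Rightarrow> 'a list \<Rightarrow> bool" where
  "mult_seq \<sigma> as \<longleftrightarrow> (\<forall>b. right_lin_dvd \<sigma> b (P_seq \<sigma> as) \<longleftrightarrow> b = hd as)"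

end

theory Submission
  imports Defs
begin



lemma fa_add: "field_aut f \<Longrightarrow> f (x + y) = f x + f y" by (simp add: field_aut_def)
lemma fa_mult: "field_aut f \<Longrightarrow> f (x * y) = f x * f y" by (simp add: field_aut_def)
lemma fa_bij: "field_aut f \<Longrightarrow> bij f" by (simp add: field_aut_def)
lemma fa_zero: "field_aut f \<Longrightarrow> f 0 = 0"
proof -
  assume a: "field_aut f"
  have "f 0 + f 0 = f 0 + 0" using fa_add[OF a, of 0 0] by simp
  then show ?thesis by (rule add_left_imp_eq)
qed
lemma fa_inj: assumes "field_aut f" "f x = f y" shows "x = y"
  using injD[OF bij_is_inj[OF fa_bij[OF assms(1)]] assms(2)] .
lemma fa_eq0: "field_aut f \<Longrightarrow> f x = 0 \<longleftrightarrow> x = 0"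
  using fa_inj[of f x 0] fa_zero[of f] by auto
lemma fa_one: "field_aut f \<Longrightarrow> f 1 = 1"
proof -
  assume a: "field_aut f"
  have e: "f 1 * f 1 = f 1 * 1" using fa_mult[OF a, of 1 1] by simp
  have nz: "f 1 \<noteq> 0" using fa_eq0[OF a, of 1] by simp
  from e show ?thesis by (simp only: mult_left_cancel[OF nz])
qed
lemma fa_uminus: "field_aut f \<Longrightarrow> f (- x) = - f x"
proof -
  assume a: "field_aut f"
  have "f x + f (- x) = 0" using fa_add[OF a, of x "-x"] fa_zero[OF a] by simp
  then show ?thesis by (simp only: add_eq_0_iff)
qed
lemma fa_diff: "field_aut f \<Longrightarrow> f (x - y) = f x - f y"
  using fa_add[of f x "-y"] fa_uminus[of f y] by simp
lemma fa_inverse: assumes a: "field_aut f" shows "f (inverse x) = inverse (f x)"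
proof (cases "x = 0")
  case True then show ?thesis using fa_zero[OF a] by simp
next
  case False
  have "f x * f (inverse x) = 1" using fa_mult[OF a, of x "inverse x"] False fa_one[OF a] by simp
  then show ?thesis by (rule inverse_unique[symmetric])
qed
lemma fa_divide: "field_aut f \<Longrightarrow> f (x / y) = f x / f y"
  by (simp add: divide_inverse fa_mult fa_inverse)
lemma fa_sum: assumes a: "field_aut f" shows "f (sum g A) = (\<Sum>i\<in>A. f (g i))"
  by (induct A rule: infinite_finite_induct) (simp_all add: fa_zero[OF a] fa_add[OF a])
lemma fa_prod: assumes a: "field_aut f" shows "f (prod g A) = (\<Prod>i\<in>A. f (g i))"
  by (induct A rule: infinite_finite_induct) (simp_all add: fa_one[OF a] fa_mult[OF a])
lemma fa_funpow: "field_aut f \<Longrightarrow> field_aut (f ^^ n)"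
proof (induct n)
  case 0 then show ?case by (simp add: field_aut_def bij_id[unfolded id_def])
next
  case (Suc n)
  assume a: "field_aut f"
  then have b: "field_aut (f ^^ n)" using Suc by simp
  show ?case using fa_add[OF a] fa_mult[OF a] fa_add[OF b] fa_mult[OF b] fa_bij[OF a] fa_bij[OF b]
    unfolding field_aut_def by (simp add: bij_comp)
qed
lemma fa_surj: "field_aut f \<Longrightarrow> \<exists>x. f x = y"
  using surjD[OF bij_is_surj[OF fa_bij], of f y] by metis

lemma sum_Suc_shift_cyc: "(\<Sum>i<m. g (Suc i)) = (\<Sum>i<m. g i) - g 0 + (g m :: 'a::ab_group_add)"
  by (induct m) (simp_all add: algebra_simps)

locale skew =
  fixes \<sigma> :: "'a::field \<Rightarrow> 'a" and m :: nat
  assumes fa: "field_aut \<sigma>" and ord: "aut_order \<sigma> m"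
begin

lemma m_pos: "0 < m" using ord by (simp add: aut_order_def)
lemma sig_m: "(\<sigma> ^^ m) x = x" using ord by (simp add: aut_order_def)
lemma faN: "field_aut (\<sigma> ^^ i)" by (rule fa_funpow[OF fa])
lemma sig_Suc: "\<sigma> ((\<sigma> ^^ i) x) = (\<sigma> ^^ Suc i) x" by simp

abbreviation T where "T \<equiv> trace_aut \<sigma> m"

lemma cyc: "g m = g 0 \<Longrightarrow> (\<Sum>i<m. g (Suc i)) = (\<Sum>i<m. (g i :: 'a))"
  using sum_Suc_shift_cyc[of g m] by simp

lemma T_fix: "\<sigma> (T x) = T x"
proof -
  have "\<sigma> (T x) = (\<Sum>i<m. (\<sigma> ^^ Suc i) x)" unfolding trace_aut_def by (simp add: fa_sum[OF fa])
  also have "\<dots> = T x" unfolding trace_aut_def by (rule cyc[where g="\<lambda>i. (\<sigma> ^^ i) x"]) (simp add: sig_m)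
  finally show ?thesis .
qed

lemma fixN: "\<sigma> k = k \<Longrightarrow> (\<sigma> ^^ i) k = k" by (induct i) simp_all

lemma T_add: "T (x + y) = T x + T y"
  unfolding trace_aut_def by (simp add: fa_add[OF faN] sum.distrib)
lemma T_diff: "T (x - y) = T x - T y"
  unfolding trace_aut_def by (simp add: fa_diff[OF faN] sum_subtractf)
lemma T_smult: "\<sigma> k = k \<Longrightarrow> T (k * x) = k * T x"
  unfolding trace_aut_def by (simp add: fa_mult[OF faN] fixN sum_distrib_left)
lemma T_D: "T (\<sigma> x - x) = 0"
proof -
  have "T (\<sigma> x) = T x" unfolding trace_aut_def
    using cyc[where g="\<lambda>i. (\<sigma> ^^ i) x"] by (simp add: sig_m funpow_swap1)
  then show ?thesis by (simp add: T_diff)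
qed

end



context skew begin

definition N :: "nat \<Rightarrow> 'a \<Rightarrow> 'a" where "N i b = (\<Prod>l<i. (\<sigma> ^^ l) b)"
definition ev :: "'a \<Rightarrow> 'a poly \<Rightarrow> 'a" where "ev b P = (\<Sum>i\<le>degree P. coeff P i * N i b)"

lemma N_0[simp]: "N 0 b = 1" by (simp add: N_def)
lemma N_1[simp]: "N (Suc 0) b = b" by (simp add: N_def)
lemma N_Suc: "N (Suc i) b = N i b * (\<sigma> ^^ i) b" by (simp add: N_def)

lemma N_add: "N (i + j) b = N i b * (\<sigma> ^^ i) (N j b)"
proof (induct j)
  case 0 then show ?case by (simp add: fa_one[OF faN])
next
  case (Suc j)
  have "N (i + Suc j) b = N (i + j) b * (\<sigma> ^^ (i + j)) b" by (simp add: N_Suc)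
  also have "\<dots> = N i b * (\<sigma> ^^ i) (N j b) * (\<sigma> ^^ i) ((\<sigma> ^^ j) b)"
    using Suc by (simp add: funpow_add)
  also have "\<dots> = N i b * (\<sigma> ^^ i) (N (Suc j) b)"
    by (simp add: N_Suc fa_mult[OF faN])
  finally show ?case .
qed

lemma ev_gen: "degree P \<le> n \<Longrightarrow> ev b P = (\<Sum>i\<le>n. coeff P i * N i b)"
  unfolding ev_def
  by (rule sum.mono_neutral_left) (auto simp: coeff_eq_0)

lemma ev_add: "ev b (P + Q) = ev b P + ev b Q"
proof -
  let ?n = "max (degree P) (degree Q)"
  have "degree (P + Q) \<le> ?n" by (rule degree_add_le) auto
  then show ?thesis
    by (simp add: ev_gen[of _ ?n] sum.distrib distrib_right)
qed

lemma ev_0[simp]: "ev b 0 = 0" by (simp add: ev_def)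

lemma ev_uminus: "ev b (- P) = - ev b P"
  by (simp add: ev_def sum_negf)

lemma ev_diff: "ev b (P - Q) = ev b P - ev b Q"
  using ev_add[of b P "-Q"] by (simp add: ev_uminus)

lemma ev_sum: "ev b (\<Sum>i\<in>A. F i) = (\<Sum>i\<in>A. ev b (F i))"
  by (induct A rule: infinite_finite_induct) (simp_all add: ev_add)

lemma shift_sum: fixes i d :: nat shows "(\<Sum>k\<le>i+d. if k < i then 0 else F (k - i)) = (\<Sum>j\<le>d. (F j :: 'a))"
proof (induct i arbitrary: F)
  case 0 then show ?case by simp
next
  case (Suc i)
  have "(\<Sum>k\<le>Suc i + d. if k < Suc i then 0 else F (k - Suc i))
      = (\<Sum>k\<le>i + d. if Suc k < Suc i then 0 else F (Suc k - Suc i))"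
    by (simp only: add_Suc sum.atMost_Suc_shift) simp
  also have "\<dots> = (\<Sum>k\<le>i + d. if k < i then 0 else F (k - i))"
    by (simp only: diff_Suc_Suc Suc_less_eq)
  finally show ?case using Suc by simp
qed

lemma ev_monom: "ev b (monom c i * map_poly (\<sigma> ^^ i) R) = c * N i b * (\<sigma> ^^ i) (ev b R)"
proof -
  let ?d = "degree R"
  have z: "(\<sigma> ^^ i) 0 = 0" by (rule fa_zero[OF faN])
  have "degree (monom c i * map_poly (\<sigma> ^^ i) R) \<le> degree (monom c i) + degree (map_poly (\<sigma> ^^ i) R)"
    by (rule degree_mult_le)
  also have "\<dots> \<le> i + ?d" using degree_monom_le[of c i] degree_map_poly[of "\<sigma> ^^ i" R] fa_eq0[OF faN] by simp
  finally have dg: "degree (monom c i * map_poly (\<sigma> ^^ i) R) \<le> i + ?d" .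
  have "ev b (monom c i * map_poly (\<sigma> ^^ i) R)
     = (\<Sum>k\<le>i+?d. if k < i then 0 else c * (\<sigma> ^^ i) (coeff R (k - i)) * N (i + (k - i)) b)"
    unfolding ev_gen[OF dg] by (rule sum.cong) (auto simp: coeff_monom_mult coeff_map_poly z)
  also have "\<dots> = (\<Sum>j\<le>?d. c * (\<sigma> ^^ i) (coeff R j) * N (i + j) b)"
    by (rule shift_sum)
  also have "\<dots> = (\<Sum>j\<le>?d. c * N i b * (\<sigma> ^^ i) (coeff R j * N j b))"
    unfolding N_add fa_mult[OF faN] by (simp add: ac_simps)
  also have "\<dots> = c * N i b * (\<sigma> ^^ i) (ev b R)"
    by (simp add: ev_def fa_sum[OF faN] sum_distrib_left)
  finally show ?thesis .
qed

lemma skew_gen: "degree Q \<le> n \<Longrightarrow> skew_mult \<sigma> Q R = (\<Sum>i\<le>n. monom (coeff Q i) i * map_poly (\<sigma> ^^ i) R)"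
  unfolding skew_mult_def
  by (rule sum.mono_neutral_left) (auto simp: coeff_eq_0)

lemma ev_skew: "ev b (skew_mult \<sigma> Q R) = (\<Sum>i\<le>degree Q. coeff Q i * N i b * (\<sigma> ^^ i) (ev b R))"
  unfolding skew_mult_def by (simp add: ev_sum ev_monom)

lemma skew_add_left: "skew_mult \<sigma> (Q1 + Q2) R = skew_mult \<sigma> Q1 R + skew_mult \<sigma> Q2 R"
proof -
  let ?n = "max (degree Q1) (degree Q2)"
  have "degree (Q1 + Q2) \<le> ?n" by (rule degree_add_le) auto
  then show ?thesis
    by (simp add: skew_gen[of _ ?n] sum.distrib distrib_right add_monom[symmetric])
qed

lemma ev_lin: "ev b [:-b, 1:] = 0"
  by (simp add: ev_def)

lemma dvd_ev: "right_lin_dvd \<sigma> b P \<Longrightarrow> ev b P = 0"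
  unfolding right_lin_dvd_def by (auto simp: ev_skew ev_lin fa_zero[OF faN])

lemma skew_monom: "skew_mult \<sigma> (monom p n) R = monom p n * map_poly (\<sigma> ^^ n) R"
proof -
  have "skew_mult \<sigma> (monom p n) R = (\<Sum>i\<le>n. monom (coeff (monom p n) i) i * map_poly (\<sigma> ^^ i) R)"
    by (rule skew_gen) (simp add: degree_monom_le)
  also have "\<dots> = (\<Sum>i\<le>n. if n = i then monom p n * map_poly (\<sigma> ^^ n) R else 0)"
    by (rule sum.cong) (auto simp: coeff_monom)
  finally show ?thesis by simp
qed

lemma ev_dvd_aux: "\<forall>P. degree P \<le> n \<longrightarrow> ev b P = 0 \<longrightarrow> (\<exists>Q. P = skew_mult \<sigma> Q [:-b, 1:])"
proof (induct n)
  case 0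
  show ?case
  proof (intro allI impI)
    fix P :: "'a poly" assume d: "degree P \<le> 0" and e: "ev b P = 0"
    have "coeff P 0 = 0" using e ev_gen[OF d] by simp
    then have "P = 0" using d by (metis coeff_eq_0 gr0I leading_coeff_0_iff le_zero_eq)
    then show "\<exists>Q. P = skew_mult \<sigma> Q [:-b, 1:]" by (intro exI[of _ 0]) (simp add: skew_mult_def)
  qed
next
  case (Suc n)
  show ?case
  proof (intro allI impI)
    fix P :: "'a poly" assume d: "degree P \<le> Suc n" and e: "ev b P = 0"
    define p where "p = coeff P (Suc n)"
    define S where "S = skew_mult \<sigma> (monom p n) [:-b, 1:]"
    have S: "S = monom p n * [:- (\<sigma> ^^ n) b, 1:]"
      unfolding S_def skew_monom by (simp add: map_poly_pCons fa_uminus[OF faN] fa_one[OF faN] fa_zero[OF faN])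
    have cS: "coeff S k = (if k < n then 0 else p * coeff [:- (\<sigma> ^^ n) b, 1:] (k - n))" for k
      unfolding S by (rule coeff_monom_mult)
    have "degree (P - S) \<le> n"
    proof (rule degree_le, intro allI impI)
      fix i assume "n < i"
      then consider "i = Suc n" | "i > Suc n" by linarith
      then show "coeff (P - S) i = 0"
      proof cases
        case 1 then show ?thesis by (simp add: cS p_def)
      next
        case 2
        then have "coeff P i = 0" using d by (simp add: coeff_eq_0)
        moreover have "coeff S i = 0" using 2 by (simp add: cS coeff_pCons split: nat.splits)
        ultimately show ?thesis by simp
      qed
    qed
    moreover have "ev b (P - S) = 0"
      using e dvd_ev[of b S] unfolding right_lin_dvd_def S_def by (auto simp: ev_diff)
    ultimately obtain Q where "P - S = skew_mult \<sigma> Q [:-b, 1:]" using Suc by blast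
    then have "P = skew_mult \<sigma> (Q + monom p n) [:-b, 1:]"
      by (simp add: skew_add_left S_def[symmetric] algebra_simps)
    then show "\<exists>Q. P = skew_mult \<sigma> Q [:-b, 1:]" by blast
  qed
qed

lemma dvd_iff_ev: "right_lin_dvd \<sigma> b P \<longleftrightarrow> ev b P = 0"
  using dvd_ev ev_dvd_aux[of "degree P" b] unfolding right_lin_dvd_def by blast

definition fv :: "'a list \<Rightarrow> 'a \<Rightarrow> 'a" where
  "fv as b = foldl (\<lambda>e c. \<sigma> e * b - c * e) 1 as"

lemma fv_snoc: "fv (as @ [c]) b = \<sigma> (fv as b) * b - c * fv as b"
  by (simp add: fv_def)

lemma ev_one: "ev b 1 = 1" by (simp add: ev_def)

lemma ev_P_seq: "ev b (P_seq \<sigma> as) = fv as b"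
proof (induct as rule: rev_induct)
  case Nil then show ?case by (simp add: P_seq_def fv_def ev_one)
next
  case (snoc c as)
  have "P_seq \<sigma> (as @ [c]) = skew_mult \<sigma> [:-c, 1:] (P_seq \<sigma> as)" by (simp add: P_seq_def)
  then show ?case using snoc by (simp add: ev_skew fv_snoc algebra_simps)
qed

lemma mult_seq_fv: "mult_seq \<sigma> as \<longleftrightarrow> (\<forall>b. fv as b = 0 \<longleftrightarrow> b = hd as)"
  unfolding mult_seq_def dvd_iff_ev ev_P_seq ..

end



context skew begin

lemma pow_distinct_aux:
  assumes ik: "i < k" and km: "k < m" shows "\<exists>s. (\<sigma> ^^ i) s \<noteq> (\<sigma> ^^ k) s"
proof (rule ccontr)
  assume "\<not> ?thesis"
  then have eq: "\<And>s. (\<sigma> ^^ i) s = (\<sigma> ^^ k) s" by blast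
  have "(\<sigma> ^^ (k - i)) = id"
  proof
    fix y
    obtain s where y: "(\<sigma> ^^ i) s = y" using fa_surj[OF faN] by blast
    have "(\<sigma> ^^ (k - i)) y = (\<sigma> ^^ (k - i + i)) s" unfolding y[symmetric] funpow_add by simp
    also have "\<dots> = (\<sigma> ^^ k) s" using ik by simp
    finally show "(\<sigma> ^^ (k - i)) y = id y" using eq y by simp
  qed
  moreover have "0 < k - i" "k - i < m" using ik km by auto
  ultimately show False using ord unfolding aut_order_def by blast
qed

lemma pow_distinct: "i < m \<Longrightarrow> k < m \<Longrightarrow> i \<noteq> k \<Longrightarrow> \<exists>s. (\<sigma> ^^ i) s \<noteq> (\<sigma> ^^ k) s"
  using pow_distinct_aux by (metis linorder_neqE_nat)

lemma dedekind:
  assumes "finite S" "S \<subseteq> {..<m}" "\<forall>t. (\<Sum>i\<in>S. c i * (\<sigma> ^^ i) t) = 0" "i \<in> S"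
  shows "c i = 0"
  using assms
proof (induct S arbitrary: c i rule: finite_induct)
  case empty then show ?case by simp
next
  case (insert k S)
  have H: "c k * (\<sigma> ^^ k) t + (\<Sum>i\<in>S. c i * (\<sigma> ^^ i) t) = 0" for t
    using insert(1,2,5) by (simp add: sum.insert)
  have Sm: "S \<subseteq> {..<m}" and km: "k < m" using insert(4) by auto
  have cS: "c j = 0" if j: "j \<in> S" for j
  proof -
    have jk: "j \<noteq> k" using j insert(2) by auto
    obtain s where s: "(\<sigma> ^^ j) s \<noteq> (\<sigma> ^^ k) s" using pow_distinct[OF _ km jk] j Sm by auto
    have "\<forall>t. (\<Sum>i\<in>S. (c i * ((\<sigma> ^^ i) s - (\<sigma> ^^ k) s)) * (\<sigma> ^^ i) t) = 0"
    proof
      fix t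
      have h1: "c k * ((\<sigma> ^^ k) s * (\<sigma> ^^ k) t) + (\<Sum>i\<in>S. c i * ((\<sigma> ^^ i) s * (\<sigma> ^^ i) t)) = 0"
        using H[of "s * t"] by (simp add: fa_mult[OF faN])
      have h2: "(\<sigma> ^^ k) s * (c k * (\<sigma> ^^ k) t + (\<Sum>i\<in>S. c i * (\<sigma> ^^ i) t)) = 0"
        using H[of t] by simp
      have "(\<Sum>i\<in>S. (c i * ((\<sigma> ^^ i) s - (\<sigma> ^^ k) s)) * (\<sigma> ^^ i) t)
          = (c k * ((\<sigma> ^^ k) s * (\<sigma> ^^ k) t) + (\<Sum>i\<in>S. c i * ((\<sigma> ^^ i) s * (\<sigma> ^^ i) t)))
            - (\<sigma> ^^ k) s * (c k * (\<sigma> ^^ k) t + (\<Sum>i\<in>S. c i * (\<sigma> ^^ i) t))"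
        by (simp add: algebra_simps sum_subtractf sum_distrib_left)
      then show "(\<Sum>i\<in>S. (c i * ((\<sigma> ^^ i) s - (\<sigma> ^^ k) s)) * (\<sigma> ^^ i) t) = 0"
        using h1 h2 by simp
    qed
    then have "c j * ((\<sigma> ^^ j) s - (\<sigma> ^^ k) s) = 0"
      by (rule insert(3)[where c="\<lambda>i. c i * ((\<sigma> ^^ i) s - (\<sigma> ^^ k) s)", OF Sm _ j])
    then show ?thesis using s by simp
  qed
  show ?case
  proof (cases "i = k")
    case True
    have "c k * (\<sigma> ^^ k) 1 + (\<Sum>i\<in>S. c i * (\<sigma> ^^ i) 1) = 0" by (rule H)
    then show ?thesis using True cS by (simp add: fa_one[OF faN])
  next
    case False then show ?thesis using insert(6) cS by auto
  qed
qed

lemma dedekind_m: "\<forall>t. (\<Sum>i<m. c i * (\<sigma> ^^ i) t) = 0 \<Longrightarrow> i < m \<Longrightarrow> c i = 0"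
  using dedekind[of "{..<m}" c i] by auto

lemma N_Suc': "N (Suc i) w = w * \<sigma> (N i w)"
  unfolding N_def prod.lessThan_Suc_shift by (simp add: fa_prod[OF fa])

lemma N_m_fix: "\<sigma> (N m w) = N m w"
proof (cases "w = 0")
  case True
  then have "N m w = 0" using m_pos unfolding N_def
    by (metis (no_types, lifting) lessThan_iff funpow_0 finite_lessThan prod_zero_iff)
  then show ?thesis by (simp add: fa_zero[OF fa])
next
  case False
  have "w * \<sigma> (N m w) = w * N m w" using N_Suc'[of m w] N_Suc[of m w] by (simp add: sig_m mult.commute) metis
  then show ?thesis using False by simp
qed

lemma exists_nonzero_sum:
  assumes "c 0 \<noteq> 0" shows "\<exists>t. (\<Sum>i<m. c i * (\<sigma> ^^ i) t) \<noteq> 0"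
  using dedekind_m[of c 0] assms m_pos by blast

lemma hilbert_mult:
  assumes "N m w = 1" shows "\<exists>\<beta>. \<beta> \<noteq> 0 \<and> w = \<sigma> \<beta> * inverse \<beta>"
proof -
  obtain t where y: "(\<Sum>i<m. N i w * (\<sigma> ^^ i) t) \<noteq> 0"
    using exists_nonzero_sum[of "\<lambda>i. N i w"] by auto
  define y where "y = (\<Sum>i<m. N i w * (\<sigma> ^^ i) t)"
  have "w * \<sigma> y = (\<Sum>i<m. N (Suc i) w * (\<sigma> ^^ Suc i) t)"
    unfolding y_def by (simp add: fa_sum[OF fa] fa_mult[OF fa] N_Suc' sum_distrib_left ac_simps)
  also have "\<dots> = y" unfolding y_def
    by (rule cyc[where g="\<lambda>i. N i w * (\<sigma> ^^ i) t"]) (simp add: assms sig_m)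
  finally have e: "w * \<sigma> y = y" .
  have yn: "y \<noteq> 0" using y y_def by simp
  then have sy: "\<sigma> y \<noteq> 0" using fa_eq0[OF fa] by simp
  show ?thesis
  proof (intro exI conjI)
    show "inverse y \<noteq> 0" using yn by simp
    show "w = \<sigma> (inverse y) * inverse (inverse y)"
      using e sy by (simp add: fa_inverse[OF fa] fa_divide[OF fa] fa_one[OF fa] field_simps)
  qed
qed

lemma surj_nonnorm:
  assumes "N m w \<noteq> 1" shows "\<exists>x. w * \<sigma> x - x = z"
proof -
  define nu where "nu = N m w"
  define c0 where "c0 = inverse (nu - 1)"
  have snu: "\<sigma> nu = nu" unfolding nu_def by (rule N_m_fix)
  have sc0: "\<sigma> c0 = c0" unfolding c0_def by (simp add: fa_inverse[OF fa] fa_diff[OF fa] fa_one[OF fa] snu)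
  define S where "S = (\<Sum>i<m. N i w * (\<sigma> ^^ i) z)"
  have "w * \<sigma> S = (\<Sum>i<m. N (Suc i) w * (\<sigma> ^^ Suc i) z)"
    unfolding S_def by (simp add: fa_sum[OF fa] fa_mult[OF fa] N_Suc' sum_distrib_left ac_simps)
  also have "\<dots> = S - z + nu * z" unfolding S_def nu_def
    using sum_Suc_shift_cyc[of "\<lambda>i. N i w * (\<sigma> ^^ i) z" m] by (simp add: sig_m)
  finally have e: "w * \<sigma> S = S - z + nu * z" .
  have nz: "nu - 1 \<noteq> 0" using assms nu_def by simp
  show ?thesis
  proof
    have "w * \<sigma> (c0 * S) - c0 * S = c0 * (w * \<sigma> S - S)"
      by (simp add: fa_mult[OF fa] sc0 algebra_simps)
    also have "\<dots> = c0 * (nu - 1) * z"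
    proof -
      have "w * \<sigma> S - S = (nu - 1) * z" using e by (simp add: algebra_simps)
      then show ?thesis by simp
    qed
    also have "\<dots> = z" using nz by (simp add: c0_def)
    finally show "w * \<sigma> (c0 * S) - c0 * S = z" .
  qed
qed

lemma hilbert_add:
  assumes "T h = 0" shows "\<exists>x. \<sigma> x - x = h"
proof -
  obtain t where tt: "(\<Sum>i<m. 1 * (\<sigma> ^^ i) t) \<noteq> 0"
    using exists_nonzero_sum[of "\<lambda>i. 1"] by auto
  then have Tt: "T t \<noteq> 0" by (simp add: trace_aut_def)
  define Sh where "Sh i = (\<Sum>j<i. (\<sigma> ^^ j) h)" for i
  have sSh: "\<sigma> (Sh i) = Sh (Suc i) - h" for i
    unfolding Sh_def sum.lessThan_Suc_shift by (simp add: fa_sum[OF fa])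
  define y where "y = (\<Sum>i<m. Sh i * (\<sigma> ^^ i) t)"
  have "\<sigma> y = (\<Sum>i<m. Sh (Suc i) * (\<sigma> ^^ Suc i) t) - h * (\<Sum>i<m. (\<sigma> ^^ Suc i) t)"
    unfolding y_def by (simp add: fa_sum[OF fa] fa_mult[OF fa] sSh algebra_simps sum_subtractf sum_distrib_left)
  also have "(\<Sum>i<m. Sh (Suc i) * (\<sigma> ^^ Suc i) t) = y" unfolding y_def
    by (rule cyc[where g="\<lambda>i. Sh i * (\<sigma> ^^ i) t"])
       (simp add: Sh_def assms[unfolded trace_aut_def])
  also have "(\<Sum>i<m. (\<sigma> ^^ Suc i) t) = T t" unfolding trace_aut_def
    by (rule cyc[where g="\<lambda>i. (\<sigma> ^^ i) t"]) (simp add: sig_m)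
  finally have e: "\<sigma> y = y - h * T t" .
  show ?thesis
  proof
    show "\<sigma> (- y / T t) - (- y / T t) = h"
      using e Tt by (simp add: fa_divide[OF fa] fa_uminus[OF fa] T_fix field_simps)
  qed
qed

lemma T_image: "(\<exists>x. \<sigma> x - x = z) \<longleftrightarrow> T z = 0"
  using hilbert_add T_D by blast

lemma nonconj_surj:
  assumes a: "a \<noteq> 0" and c: "c \<noteq> 0" and nc: "\<not> (\<exists>\<beta>. \<beta> \<noteq> 0 \<and> c = \<sigma> \<beta> * inverse \<beta> * a)"
  shows "\<exists>g. \<sigma> g * c - a * g = z"
proof (cases "N m (c / a) = 1")
  case True
  then obtain \<beta> where "\<beta> \<noteq> 0" "c / a = \<sigma> \<beta> * inverse \<beta>" using hilbert_mult by blast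
  then show ?thesis using nc a by (auto simp: field_simps)
next
  case False
  then obtain x where x: "c / a * \<sigma> x - x = z / a" using surj_nonnorm by blast
  show ?thesis
  proof
    show "\<sigma> x * c - a * x = z" using x a by (simp add: field_simps)
  qed
qed

end



context skew begin

definition MS :: "'a list \<Rightarrow> bool" where "MS as \<longleftrightarrow> (\<forall>b. fv as b = 0 \<longleftrightarrow> b = hd as)"
definition Gv :: "'a list \<Rightarrow> 'a \<Rightarrow> 'a \<Rightarrow> 'a" where "Gv as c x = foldl (\<lambda>g a. \<sigma> g * c - a * g) x as"
definition step :: "'a \<Rightarrow> 'a \<Rightarrow> bool" where
  "step a c \<longleftrightarrow> (\<exists>\<beta>. \<beta> \<noteq> 0 \<and> c = \<sigma> \<beta> * inverse \<beta> * a \<and> T (\<beta> * inverse a) \<noteq> 0)"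
definition chain :: "'a list \<Rightarrow> bool" where
  "chain as \<longleftrightarrow> (\<forall>i. i + 1 < length as \<longrightarrow> step (as ! i) (as ! (i + 1)))"
definition allz :: "'a list \<Rightarrow> bool" where "allz as \<longleftrightarrow> (\<forall>i<length as. as ! i = 0)"
definition Cnd :: "'a list \<Rightarrow> bool" where "Cnd as \<longleftrightarrow> allz as \<or> (as ! 0 \<noteq> 0 \<and> chain as)"

lemma fv_Nil[simp]: "fv [] b = 1" by (simp add: fv_def)

lemma fv0: "foldl (\<lambda>e c. \<sigma> e * b - c * e) 0 rest = 0"
  by (induct rest) (simp_all add: fa_zero[OF fa])

lemma fv_hd: "as \<noteq> [] \<Longrightarrow> fv as (hd as) = 0"
  by (cases as) (simp_all add: fv_def fa_one[OF fa] fv0)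

lemma ms_snoc:
  assumes "bs \<noteq> []"
  shows "MS (bs @ [c]) \<longleftrightarrow> MS bs \<and> \<not> (\<exists>b. fv bs b \<noteq> 0 \<and> \<sigma> (fv bs b) * b = c * fv bs b)"
proof -
  have hd: "hd (bs @ [c]) = hd bs" using assms by simp
  have h0: "fv bs (hd bs) = 0" using fv_hd[OF assms] .
  have z: "fv bs b = 0 \<Longrightarrow> fv (bs @ [c]) b = 0" for b by (simp add: fv_snoc fa_zero[OF fa])
  show ?thesis
  proof
    assume M: "MS (bs @ [c])"
    have "MS bs" unfolding MS_def
    proof
      fix b show "fv bs b = 0 \<longleftrightarrow> b = hd bs"
        using M z[of b] h0 hd unfolding MS_def by metis
    qed
    moreover have "\<not> (\<exists>b. fv bs b \<noteq> 0 \<and> \<sigma> (fv bs b) * b = c * fv bs b)"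
    proof
      assume "\<exists>b. fv bs b \<noteq> 0 \<and> \<sigma> (fv bs b) * b = c * fv bs b"
      then obtain b where b: "fv bs b \<noteq> 0" "\<sigma> (fv bs b) * b = c * fv bs b" by blast
      then have "fv (bs @ [c]) b = 0" by (simp add: fv_snoc)
      then have "b = hd bs" using M hd unfolding MS_def by metis
      then show False using b h0 by simp
    qed
    ultimately show "MS bs \<and> \<not> (\<exists>b. fv bs b \<noteq> 0 \<and> \<sigma> (fv bs b) * b = c * fv bs b)" by blast
  next
    assume A: "MS bs \<and> \<not> (\<exists>b. fv bs b \<noteq> 0 \<and> \<sigma> (fv bs b) * b = c * fv bs b)"
    show "MS (bs @ [c])" unfolding MS_def hd
    proof
      fix b
      show "fv (bs @ [c]) b = 0 \<longleftrightarrow> b = hd bs"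
      proof (cases "fv bs b = 0")
        case True then show ?thesis using A z[of b] unfolding MS_def by blast
      next
        case False
        have "\<sigma> (fv bs b) * b \<noteq> c * fv bs b" using A False by blast
        then have "fv (bs @ [c]) b \<noteq> 0" by (simp add: fv_snoc)
        moreover have "b \<noteq> hd bs" using False h0 by auto
        ultimately show ?thesis by simp
      qed
    qed
  qed
qed

lemma Gv_Nil[simp]: "Gv [] c x = x" by (simp add: Gv_def)
lemma Gv_snoc: "Gv (as @ [a]) c x = \<sigma> (Gv as c x) * c - a * Gv as c x"
  by (simp add: Gv_def)
lemma Gv_0: "Gv as c 0 = 0"
  by (induct as rule: rev_induct) (simp_all add: Gv_snoc fa_zero[OF fa])

lemma fG: "x \<noteq> 0 \<Longrightarrow> fv as (\<sigma> x * c / x) * x = Gv as c x"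
proof (induct as rule: rev_induct)
  case Nil then show ?case by simp
next
  case (snoc a as)
  have "fv (as @ [a]) (\<sigma> x * c / x) * x
      = \<sigma> (fv as (\<sigma> x * c / x)) * \<sigma> x * c - a * (fv as (\<sigma> x * c / x) * x)"
    using snoc(2) by (simp add: fv_snoc field_simps)
  also have "\<dots> = \<sigma> (Gv as c x) * c - a * Gv as c x"
  proof -
    have IH: "fv as (\<sigma> x * c / x) * x = Gv as c x" using snoc by blast
    have s: "\<sigma> (fv as (\<sigma> x * c / x)) * \<sigma> x = \<sigma> (Gv as c x)"
      using IH fa_mult[OF fa, of "fv as (\<sigma> x * c / x)" x] by simp
    show ?thesis by (simp only: s IH)
  qed
  finally show ?case by (simp add: Gv_snoc)
qed

lemma lemA:
  assumes c: "c \<noteq> 0"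
  shows "(\<exists>b. fv bs b \<noteq> 0 \<and> \<sigma> (fv bs b) * b = c * fv bs b) \<longleftrightarrow> (\<exists>x. Gv bs c x = 1)"
proof
  assume "\<exists>b. fv bs b \<noteq> 0 \<and> \<sigma> (fv bs b) * b = c * fv bs b"
  then obtain b where f: "fv bs b \<noteq> 0" and e: "\<sigma> (fv bs b) * b = c * fv bs b" by blast
  define x where "x = inverse (fv bs b)"
  have sf: "\<sigma> (fv bs b) \<noteq> 0" using f fa_eq0[OF fa] by simp
  have x0: "x \<noteq> 0" using f x_def by simp
  have "\<sigma> x * c / x = b" using e sf f unfolding x_def by (simp add: fa_inverse[OF fa] fa_divide[OF fa] fa_one[OF fa] field_simps)
  then have "Gv bs c x = fv bs b * x" using fG[OF x0, of bs c] by simp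
  then show "\<exists>x. Gv bs c x = 1" using f x_def by auto
next
  assume "\<exists>x. Gv bs c x = 1"
  then obtain x where g: "Gv bs c x = 1" by blast
  then have x0: "x \<noteq> 0" using Gv_0 by (metis zero_neq_one)
  define b where "b = \<sigma> x * c / x"
  have fb: "fv bs b = inverse x" using fG[OF x0, of bs c] g x0 unfolding b_def by (simp add: field_simps)
  have sx: "\<sigma> x \<noteq> 0" using x0 fa_eq0[OF fa] by simp
  show "\<exists>b. fv bs b \<noteq> 0 \<and> \<sigma> (fv bs b) * b = c * fv bs b"
  proof (intro exI conjI)
    show "fv bs b \<noteq> 0" using fb x0 by simp
    have "\<sigma> (inverse x) * b = c * inverse x" unfolding b_def using sx x0
      by (simp add: fa_inverse[OF fa] fa_divide[OF fa] fa_one[OF fa] field_simps)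
    then show "\<sigma> (fv bs b) * b = c * fv bs b" by (simp only: fb)
  qed
qed

lemma Gsurj: "(\<forall>a\<in>set bs. \<forall>z. \<exists>g. \<sigma> g * c - a * g = z) \<Longrightarrow> \<exists>x. Gv bs c x = z"
proof (induct bs arbitrary: z rule: rev_induct)
  case Nil then show ?case by simp
next
  case (snoc a bs)
  have "\<forall>z. \<exists>g. \<sigma> g * c - a * g = z" using snoc(2) by simp
  then obtain g where g: "\<sigma> g * c - a * g = z" by blast
  have "\<forall>a\<in>set bs. \<forall>z. \<exists>g. \<sigma> g * c - a * g = z" using snoc(2) by simp
  then obtain x where "Gv bs c x = g" using snoc(1) by blast
  then show ?case using g by (auto simp: Gv_snoc)
qed

lemma chain_snoc:
  assumes "bs \<noteq> []"
  shows "chain (bs @ [c]) \<longleftrightarrow> chain bs \<and> step (last bs) c"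
proof -
  have l: "last bs = bs ! (length bs - 1)" using assms by (simp add: last_conv_nth)
  show ?thesis unfolding chain_def
  proof safe
    fix i assume H: "\<forall>i. i + 1 < length (bs @ [c]) \<longrightarrow> step ((bs @ [c]) ! i) ((bs @ [c]) ! (i + 1))"
      and i: "i + 1 < length bs"
    then show "step (bs ! i) (bs ! (i + 1))" using H[rule_format, of i] by (simp add: nth_append)
  next
    assume H: "\<forall>i. i + 1 < length (bs @ [c]) \<longrightarrow> step ((bs @ [c]) ! i) ((bs @ [c]) ! (i + 1))"
    show "step (last bs) c" using H[rule_format, of "length bs - 1"] assms l
      by (simp add: nth_append)
  next
    fix i assume H: "\<forall>i. i + 1 < length bs \<longrightarrow> step (bs ! i) (bs ! (i + 1))"
      and s: "step (last bs) c" and i: "i + 1 < length (bs @ [c])"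
    show "step ((bs @ [c]) ! i) ((bs @ [c]) ! (i + 1))"
    proof (cases "i + 1 < length bs")
      case True then show ?thesis using H by (simp add: nth_append)
    next
      case False
      then have "i = length bs - 1" using i by simp
      then show ?thesis using s l assms False by (simp add: nth_append)
    qed
  qed
qed

lemma allz_snoc: "allz (bs @ [c]) \<longleftrightarrow> allz bs \<and> c = 0"
  unfolding allz_def by (auto simp: nth_append less_Suc_eq)

lemma chain_nz:
  assumes "bs ! 0 \<noteq> 0" "chain bs" shows "i < length bs \<Longrightarrow> bs ! i \<noteq> 0"
proof (induct i)
  case 0 then show ?case using assms by simp
next
  case (Suc i)
  then have "step (bs ! i) (bs ! (i + 1))" using assms(2) unfolding chain_def by simp
  then obtain \<beta> where "\<beta> \<noteq> 0" "bs ! (i + 1) = \<sigma> \<beta> * inverse \<beta> * bs ! i" unfolding step_def by blast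
  then show ?case using Suc fa_eq0[OF fa, of \<beta>] by simp
qed

lemma chain_nz_set: "bs ! 0 \<noteq> 0 \<Longrightarrow> chain bs \<Longrightarrow> a \<in> set bs \<Longrightarrow> a \<noteq> 0"
  using chain_nz by (metis in_set_conv_nth)

lemma conj_last:
  "bs \<noteq> [] \<Longrightarrow> bs ! 0 \<noteq> 0 \<Longrightarrow> chain bs \<Longrightarrow> a \<in> set bs \<Longrightarrow> \<exists>\<gamma>. \<gamma> \<noteq> 0 \<and> last bs = \<sigma> \<gamma> * inverse \<gamma> * a"
proof (induct bs rule: rev_induct)
  case Nil then show ?case by simp
next
  case (snoc c bs)
  show ?case
  proof (cases "a = c")
    case True then show ?thesis by (intro exI[of _ 1]) (simp add: fa_one[OF fa])
  next
    case False
    then have a: "a \<in> set bs" using snoc by simp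
    then have bne: "bs \<noteq> []" by auto
    have ch: "chain bs" "step (last bs) c" using snoc(4) chain_snoc[OF bne] by auto
    have b0: "bs ! 0 \<noteq> 0" using snoc(3) bne by (simp add: nth_append)
    obtain \<gamma> where g: "\<gamma> \<noteq> 0" "last bs = \<sigma> \<gamma> * inverse \<gamma> * a" using snoc(1)[OF bne b0 ch(1) a] by blast
    obtain \<beta> where b: "\<beta> \<noteq> 0" "c = \<sigma> \<beta> * inverse \<beta> * last bs" using ch(2) unfolding step_def by blast
    show ?thesis
    proof (intro exI conjI)
      show "\<beta> * \<gamma> \<noteq> 0" using g b by simp
      show "last (bs @ [c]) = \<sigma> (\<beta> * \<gamma>) * inverse (\<beta> * \<gamma>) * a"
        using b(2) g(2) by (simp add: fa_mult[OF fa] ac_simps)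
    qed
  qed
qed

lemma ident: "\<delta> \<noteq> 0 \<Longrightarrow> \<sigma> g * (\<sigma> \<delta> * inverse \<delta> * a) - a * g = a * inverse \<delta> * (\<sigma> (g * \<delta>) - g * \<delta>)"
  by (simp add: fa_mult[OF fa] field_simps)

lemma Inv:
  "bs \<noteq> [] \<Longrightarrow> bs ! 0 \<noteq> 0 \<Longrightarrow> chain bs \<Longrightarrow> \<forall>\<delta> z. \<delta> \<noteq> 0 \<longrightarrow>
     ((\<exists>x. Gv bs (\<sigma> \<delta> * inverse \<delta> * last bs) x = z) \<longleftrightarrow> T (z * \<delta> * inverse (last bs)) = 0)"
proof (induct bs rule: rev_induct)
  case Nil then show ?case by simp
next
  case (snoc c bs)
  show ?case
  proof (intro allI impI)
    fix \<delta> z :: 'a assume d: "\<delta> \<noteq> 0"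
    show "(\<exists>x. Gv (bs @ [c]) (\<sigma> \<delta> * inverse \<delta> * last (bs @ [c])) x = z) \<longleftrightarrow>
          T (z * \<delta> * inverse (last (bs @ [c]))) = 0"
    proof (cases "bs = []")
      case True
      then have c0: "c \<noteq> 0" using snoc(3) by simp
      have "(\<exists>x. Gv (bs @ [c]) (\<sigma> \<delta> * inverse \<delta> * last (bs @ [c])) x = z)
          \<longleftrightarrow> (\<exists>x. c * inverse \<delta> * (\<sigma> (x * \<delta>) - x * \<delta>) = z)"
        using True d by (simp add: Gv_def ident)
      also have "\<dots> \<longleftrightarrow> (\<exists>y. \<sigma> y - y = z * \<delta> * inverse c)"
      proof
        assume "\<exists>x. c * inverse \<delta> * (\<sigma> (x * \<delta>) - x * \<delta>) = z"
        then obtain x where "c * inverse \<delta> * (\<sigma> (x * \<delta>) - x * \<delta>) = z" by blast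
        then have "\<sigma> (x * \<delta>) - x * \<delta> = z * \<delta> * inverse c" using c0 d by (auto simp: field_simps)
        then show "\<exists>y. \<sigma> y - y = z * \<delta> * inverse c" by blast
      next
        assume "\<exists>y. \<sigma> y - y = z * \<delta> * inverse c"
        then obtain y where y: "\<sigma> y - y = z * \<delta> * inverse c" by blast
        have "c * inverse \<delta> * (\<sigma> ((y / \<delta>) * \<delta>) - (y / \<delta>) * \<delta>) = z"
          using y d c0 by (simp add: field_simps)
        then show "\<exists>x. c * inverse \<delta> * (\<sigma> (x * \<delta>) - x * \<delta>) = z" by blast
      qed
      also have "\<dots> \<longleftrightarrow> T (z * \<delta> * inverse (last (bs @ [c]))) = 0" by (simp add: T_image)
      finally show ?thesis .
    next
      case False
      have ch: "chain bs" "step (last bs) c" using snoc(4) chain_snoc[OF False] by auto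
      have b0: "bs ! 0 \<noteq> 0" using snoc(3) False by (simp add: nth_append)
      define L where "L = last bs"
      have L0: "L \<noteq> 0" unfolding L_def using chain_nz_set[OF b0 ch(1)] False by simp
      obtain \<beta> where b: "\<beta> \<noteq> 0" "c = \<sigma> \<beta> * inverse \<beta> * L" "T (\<beta> * inverse L) \<noteq> 0"
        using ch(2) unfolding step_def L_def by blast
      have c0: "c \<noteq> 0" using b L0 fa_eq0[OF fa, of \<beta>] by simp
      have db: "\<delta> * \<beta> \<noteq> 0" using d b by simp
      have C: "\<sigma> \<delta> * inverse \<delta> * c = \<sigma> (\<delta> * \<beta>) * inverse (\<delta> * \<beta>) * L"
        using b d by (simp add: fa_mult[OF fa] field_simps)
      have IH: "(\<exists>x. Gv bs (\<sigma> \<delta> * inverse \<delta> * c) x = g) \<longleftrightarrow> T (g * (\<delta> * \<beta>) * inverse L) = 0" for g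
        using snoc(1)[OF False b0 ch(1)] db unfolding C L_def by blast
      have G: "Gv (bs @ [c]) (\<sigma> \<delta> * inverse \<delta> * c) x
          = c * inverse \<delta> * (\<sigma> (Gv bs (\<sigma> \<delta> * inverse \<delta> * c) x * \<delta>) - Gv bs (\<sigma> \<delta> * inverse \<delta> * c) x * \<delta>)" for x
        using d by (simp add: Gv_snoc ident)
      show ?thesis
      proof
        assume "\<exists>x. Gv (bs @ [c]) (\<sigma> \<delta> * inverse \<delta> * last (bs @ [c])) x = z"
        then obtain x where "Gv (bs @ [c]) (\<sigma> \<delta> * inverse \<delta> * c) x = z" by auto
        then have "z * \<delta> * inverse c = \<sigma> (Gv bs (\<sigma> \<delta> * inverse \<delta> * c) x * \<delta>) - Gv bs (\<sigma> \<delta> * inverse \<delta> * c) x * \<delta>"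
          unfolding G using c0 d by (auto simp: field_simps)
        then show "T (z * \<delta> * inverse (last (bs @ [c]))) = 0" by (simp add: T_D)
      next
        assume "T (z * \<delta> * inverse (last (bs @ [c]))) = 0"
        then obtain y0 where y0: "\<sigma> y0 - y0 = z * \<delta> * inverse c" using hilbert_add by auto
        define u where "u = \<beta> * inverse L"
        have Tu: "T u \<noteq> 0" using b u_def by simp
        define k where "k = - T (y0 * u) / T u"
        have sk: "\<sigma> k = k" unfolding k_def by (simp add: fa_divide[OF fa] fa_uminus[OF fa] T_fix)
        define y where "y = y0 + k"
        have "T (y * u) = T (y0 * u) + k * T u" unfolding y_def by (simp add: distrib_right T_add T_smult[OF sk])
        then have Ty: "T (y * u) = 0" using Tu unfolding k_def by simp
        have "T ((y / \<delta>) * (\<delta> * \<beta>) * inverse L) = 0" using Ty d unfolding u_def by (simp add: field_simps)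
        then obtain x where x: "Gv bs (\<sigma> \<delta> * inverse \<delta> * c) x = y / \<delta>" using IH by blast
        have sy: "\<sigma> y - y = z * \<delta> * inverse c" using y0 sk unfolding y_def by (simp add: fa_add[OF fa])
        have "Gv (bs @ [c]) (\<sigma> \<delta> * inverse \<delta> * c) x = z"
          unfolding G x using d c0 sy by (simp add: field_simps)
        then show "\<exists>x. Gv (bs @ [c]) (\<sigma> \<delta> * inverse \<delta> * last (bs @ [c])) x = z" by auto
      qed
    qed
  qed
qed

end



context skew begin

lemma fv_nz0: "(\<forall>a\<in>set bs. a \<noteq> 0) \<Longrightarrow> fv bs 0 \<noteq> 0"
  by (induct bs rule: rev_induct) (simp_all add: fv_snoc)

lemma main: "as \<noteq> [] \<Longrightarrow> MS as \<longleftrightarrow> Cnd as"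
proof (induct as rule: rev_induct)
  case Nil then show ?case by simp
next
  case (snoc c bs)
  show ?case
  proof (cases "bs = []")
    case True
    have "MS [c]" unfolding MS_def by (simp add: fv_snoc[of "[]", simplified] fa_one[OF fa])
    moreover have "Cnd [c]" unfolding Cnd_def allz_def chain_def by auto
    ultimately show ?thesis using True by simp
  next
    case False
    have IH: "MS bs \<longleftrightarrow> Cnd bs" using snoc False by blast
    define E where "E = (\<exists>b. fv bs b \<noteq> 0 \<and> \<sigma> (fv bs b) * b = c * fv bs b)"
    have ms: "MS (bs @ [c]) \<longleftrightarrow> MS bs \<and> \<not> E" unfolding E_def by (rule ms_snoc[OF False])
    have n0: "(bs @ [c]) ! 0 = bs ! 0" using False by (simp add: nth_append)
    have cnd: "Cnd (bs @ [c]) \<longleftrightarrow> (allz bs \<and> c = 0) \<or> (bs ! 0 \<noteq> 0 \<and> chain bs \<and> step (last bs) c)"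
      unfolding Cnd_def allz_snoc chain_snoc[OF False] n0 by blast
    have b0len: "0 < length bs" using False by simp
    show ?thesis
    proof (cases "allz bs")
      case True
      have bz: "bs ! 0 = 0" using True b0len unfolding allz_def by blast
      have MSb: "MS bs" using IH True unfolding Cnd_def by blast
      have f0: "fv bs 0 = 0" using fv_hd[OF False] bz False by (simp add: hd_conv_nth)
      have "\<not> E \<longleftrightarrow> c = 0"
      proof
        assume nE: "\<not> E"
        show "c = 0"
        proof (rule ccontr)
          assume c: "c \<noteq> 0"
          have "\<forall>a\<in>set bs. \<forall>z. \<exists>g. \<sigma> g * c - a * g = z"
          proof (intro ballI allI)
            fix a z assume a: "a \<in> set bs"
            then have "a = 0" using True unfolding allz_def by (metis in_set_conv_nth)
            obtain g where "\<sigma> g = z / c" using fa_surj[OF fa] by blast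
            then have "\<sigma> g * c - a * g = z" using c \<open>a = 0\<close> by simp
            then show "\<exists>g. \<sigma> g * c - a * g = z" by blast
          qed
          then have "\<exists>x. Gv bs c x = 1" by (rule Gsurj)
          then show False using nE lemA[OF c] unfolding E_def by blast
        qed
      next
        assume c: "c = 0"
        show "\<not> E"
        proof
          assume E
          then obtain b where b: "fv bs b \<noteq> 0" "\<sigma> (fv bs b) * b = c * fv bs b" unfolding E_def by blast
          have "\<sigma> (fv bs b) \<noteq> 0" using b(1) fa_eq0[OF fa] by simp
          then have "b = 0" using b(2) c by simp
          then show False using b(1) f0 by simp
        qed
      qed
      then show ?thesis using ms cnd MSb bz \<open>allz bs\<close> by auto
    next
      case nallz: False
      show ?thesis
      proof (cases "bs ! 0 \<noteq> 0 \<and> chain bs")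
        case False
        then have "\<not> Cnd bs" using nallz unfolding Cnd_def by blast
        then show ?thesis using IH ms cnd nallz False by blast
      next
        case True
        then have b0: "bs ! 0 \<noteq> 0" and ch: "chain bs" by auto
        have MSb: "MS bs" using IH True unfolding Cnd_def by blast
        have nz: "\<forall>a\<in>set bs. a \<noteq> 0" using chain_nz_set[OF b0 ch] by blast
        define L where "L = last bs"
        have L0: "L \<noteq> 0" using nz False unfolding L_def by simp
        have "\<not> E \<longleftrightarrow> step L c"
        proof (cases "c = 0")
          case True
          have E unfolding E_def using fv_nz0[OF nz] True by auto
          moreover have "\<not> step L c" unfolding step_def using True L0 fa_eq0[OF fa] by auto
          ultimately show ?thesis by blast
        next
          case c0: False
          have EG: "E \<longleftrightarrow> (\<exists>x. Gv bs c x = 1)" unfolding E_def by (rule lemA[OF c0])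
          show ?thesis
          proof
            assume nE: "\<not> E"
            show "step L c"
            proof (rule ccontr)
              assume ns: "\<not> step L c"
              have "\<exists>x. Gv bs c x = 1"
              proof (cases "\<exists>\<beta>. \<beta> \<noteq> 0 \<and> c = \<sigma> \<beta> * inverse \<beta> * L")
                case True
                then obtain \<beta> where b: "\<beta> \<noteq> 0" "c = \<sigma> \<beta> * inverse \<beta> * L" by blast
                then have "T (\<beta> * inverse L) = 0" using ns unfolding step_def by blast
                then show ?thesis using Inv[OF False b0 ch] b unfolding L_def by simp
              next
                case nc: False
                have "\<forall>a\<in>set bs. \<forall>z. \<exists>g. \<sigma> g * c - a * g = z"
                proof (intro ballI allI)
                  fix a z assume a: "a \<in> set bs"
                  have a0: "a \<noteq> 0" using nz a by blast
                  obtain \<gamma> where g: "\<gamma> \<noteq> 0" "L = \<sigma> \<gamma> * inverse \<gamma> * a"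
                    using conj_last[OF False b0 ch a] unfolding L_def by blast
                  have sg: "\<sigma> \<gamma> \<noteq> 0" using g fa_eq0[OF fa] by simp
                  have "\<not> (\<exists>\<beta>. \<beta> \<noteq> 0 \<and> c = \<sigma> \<beta> * inverse \<beta> * a)"
                  proof
                    assume "\<exists>\<beta>. \<beta> \<noteq> 0 \<and> c = \<sigma> \<beta> * inverse \<beta> * a"
                    then obtain \<beta> where b: "\<beta> \<noteq> 0" "c = \<sigma> \<beta> * inverse \<beta> * a" by blast
                    have "c = \<sigma> (\<beta> / \<gamma>) * inverse (\<beta> / \<gamma>) * L"
                      unfolding b(2) g(2) using b(1) g(1) sg by (simp add: fa_divide[OF fa] field_simps)
                    moreover have "\<beta> / \<gamma> \<noteq> 0" using b g by simp
                    ultimately show False using nc by blast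
                  qed
                  then show "\<exists>g. \<sigma> g * c - a * g = z" using nonconj_surj[OF a0 c0] by blast
                qed
                then show ?thesis by (rule Gsurj)
              qed
              then show False using nE EG by blast
            qed
          next
            assume "step L c"
            then obtain \<beta> where b: "\<beta> \<noteq> 0" "c = \<sigma> \<beta> * inverse \<beta> * L" "T (\<beta> * inverse L) \<noteq> 0"
              unfolding step_def by blast
            have "\<not> (\<exists>x. Gv bs c x = 1)" using Inv[OF False b0 ch] b unfolding L_def by simp
            then show "\<not> E" using EG by blast
          qed
        qed
        then show ?thesis using ms cnd MSb b0 ch nallz unfolding L_def by blast
      qed
    qed
  qed
qed

end

theorem mainTheorem18:
  fixes \<sigma> :: "'a::field \<Rightarrow> 'a" and m :: nat
  assumes "field_aut \<sigma>" and "aut_order \<sigma> m"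
  shows "(\<forall>as::'a list. as \<noteq> [] \<longrightarrow>
           (mult_seq \<sigma> as \<longleftrightarrow>
             ((\<forall>i<length as. as ! i = 0) \<or>
              (as ! 0 \<noteq> 0 \<and>
               (\<forall>i. i + 1 < length as \<longrightarrow>
                  (\<exists>\<beta>. \<beta> \<noteq> 0 \<and> as ! (i + 1) = \<sigma> \<beta> * inverse \<beta> * as ! i
                       \<and> trace_aut \<sigma> m (\<beta> * inverse (as ! i)) \<noteq> 0))))))
       \<and> (\<forall>(a::'a) r. a \<noteq> 0 \<longrightarrow> 2 \<le> r \<longrightarrow>
           (mult_seq \<sigma> (replicate r a) \<longleftrightarrow> trace_aut \<sigma> m (inverse a) \<noteq> 0))"
proof -
  interpret skew \<sigma> m using assms by unfold_locales
  have P1: "\<forall>as::'a list. as \<noteq> [] \<longrightarrow>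
           (mult_seq \<sigma> as \<longleftrightarrow>
             ((\<forall>i<length as. as ! i = 0) \<or>
              (as ! 0 \<noteq> 0 \<and>
               (\<forall>i. i + 1 < length as \<longrightarrow>
                  (\<exists>\<beta>. \<beta> \<noteq> 0 \<and> as ! (i + 1) = \<sigma> \<beta> * inverse \<beta> * as ! i
                       \<and> trace_aut \<sigma> m (\<beta> * inverse (as ! i)) \<noteq> 0)))))"
    using main unfolding mult_seq_fv MS_def[symmetric] Cnd_def allz_def chain_def step_def by blast
  have P2: "mult_seq \<sigma> (replicate r a) \<longleftrightarrow> T (inverse a) \<noteq> 0" if a: "a \<noteq> 0" and r: "2 \<le> r" for a :: 'a and r
  proof -
    have ne: "replicate r a \<noteq> []" using r by auto
    have "mult_seq \<sigma> (replicate r a) \<longleftrightarrow> (\<exists>\<beta>. \<beta> \<noteq> 0 \<and> a = \<sigma> \<beta> * inverse \<beta> * a \<and> T (\<beta> * inverse a) \<noteq> 0)"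
    proof -
      have "mult_seq \<sigma> (replicate r a) \<longleftrightarrow> (\<forall>i. i + 1 < r \<longrightarrow>
                  (\<exists>\<beta>. \<beta> \<noteq> 0 \<and> a = \<sigma> \<beta> * inverse \<beta> * a \<and> T (\<beta> * inverse a) \<noteq> 0))"
        using P1[rule_format, OF ne] a r by (auto simp: nth_replicate)
      also have "\<dots> \<longleftrightarrow> (\<exists>\<beta>. \<beta> \<noteq> 0 \<and> a = \<sigma> \<beta> * inverse \<beta> * a \<and> T (\<beta> * inverse a) \<noteq> 0)"
        (is "(\<forall>i. i + 1 < r \<longrightarrow> ?P) \<longleftrightarrow> _")
      proof
        assume H: "\<forall>i. i + 1 < r \<longrightarrow> ?P"
        show ?P using H[rule_format, of 0] r by simp
      qed blast
      finally show ?thesis .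
    qed
    also have "\<dots> \<longleftrightarrow> T (inverse a) \<noteq> 0"
    proof
      assume "\<exists>\<beta>. \<beta> \<noteq> 0 \<and> a = \<sigma> \<beta> * inverse \<beta> * a \<and> T (\<beta> * inverse a) \<noteq> 0"
      then obtain \<beta> where b: "\<beta> \<noteq> 0" "a = \<sigma> \<beta> * inverse \<beta> * a" "T (\<beta> * inverse a) \<noteq> 0" by blast
      have "\<sigma> \<beta> = \<beta>" using b a by (simp add: field_simps)
      then have "T (\<beta> * inverse a) = \<beta> * T (inverse a)" by (rule T_smult)
      then show "T (inverse a) \<noteq> 0" using b by simp
    next
      assume "T (inverse a) \<noteq> 0"
      then show "\<exists>\<beta>. \<beta> \<noteq> 0 \<and> a = \<sigma> \<beta> * inverse \<beta> * a \<and> T (\<beta> * inverse a) \<noteq> 0"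
        by (intro exI[of _ 1]) (simp add: fa_one[OF fa])
    qed
    finally show ?thesis .
  qed
  show ?thesis using P1 P2 by blast
qed



end
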